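(* Let $A\in\mathbb{C}^{m\times n}$. Then there exists $X\in A\{1,3^{\mathfrak{m}}\}$ if and only if there exists $Y\in A\{1,2,3^{\mathfrak{m}}\}$.
   Context: For a positive integer $k$, the Minkowski metric matrix of order $k$ is $G_k=\begin{pmatrix}1&0\\0&-I_{k-1}\end{pmatrix}$ (with $G_1=(1)$). For $A\in\mathbb{C}^{m\times n}$, the Minkowski adjoint is $A^{\sim}=G_nA^*G_m$, where $A^*$ is the conjugate transpose. For $A\in\mathbb{C}^{m\times n}$ and $X\in\mathbb{C}^{n\times m}$ consider the equations $(1)\ AXA=A$, $(2)\ XAX=X$, $(3^{\mathfrak{m}})\ (AX)^{\sim}=AX$, $(4^{\mathfrak{m}})\ (XA)^{\sim}=XA$. For a selection $i,j,\dots,k$ of these equations, $A\{i,j,\dots,k\}$ denotes the set of all $X\in\mathbb{C}^{n\times m}$ satisfying equations $(i),(j),\dots,(k)$. *)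

theory Defs
  imports "Jordan_Normal_Form.Matrix" "HOL.Complex"
begin

definition minkowski_G :: "nat \<Rightarrow> complex mat" where
  "minkowski_G k = mat k k (\<lambda>(i, j). if i = j then (if i = 0 then 1 else -1) else 0)"

definition conj_transpose :: "complex mat \<Rightarrow> complex mat" where
  "conj_transpose A = mat (dim_col A) (dim_row A) (\<lambda>(i, j). cnj (A $$ (j, i)))"

definition minkowski_adj :: "complex mat \<Rightarrow> complex mat" where
  "minkowski_adj A = minkowski_G (dim_col A) * conj_transpose A * minkowski_G (dim_row A)"

definition mink_inv_13 :: "complex mat \<Rightarrow> complex mat set" where
  "mink_inv_13 A = {X. X \<in> carrier_mat (dim_col A) (dim_row A) \<and>
      A * X * A = A \<and> minkowski_adj (A * X) = A * X}"

definition mink_inv_123 :: "complex mat \<Rightarrow> complex mat set" where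
  "mink_inv_123 A = {X. X \<in> carrier_mat (dim_col A) (dim_row A) \<and>
      A * X * A = A \<and> X * A * X = X \<and> minkowski_adj (A * X) = A * X}"

end

theory Submission
  imports Defs
begin

theorem theorem4p2:
  fixes A :: "complex mat" and m n :: nat
  assumes "m > 0" and "n > 0" and "A \<in> carrier_mat m n"
  shows "(\<exists>X. X \<in> mink_inv_13 A) \<longleftrightarrow> (\<exists>Y. Y \<in> mink_inv_123 A)"
proof
  assume "\<exists>X. X \<in> mink_inv_13 A"
  then obtain X where X: "X \<in> carrier_mat n m" "A * X * A = A" "minkowski_adj (A * X) = A * X"
    using assms(3) unfolding mink_inv_13_def by auto
  have A: "A \<in> carrier_mat m n" by fact
  have AX: "A * X \<in> carrier_mat m m" using A X by simp
  have XA: "X * A \<in> carrier_mat n n" using A X by simp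
  define Y where "Y = X * A * X"
  have Yc: "Y \<in> carrier_mat n m" unfolding Y_def using X A by auto
  have AY: "A * Y = A * X"
  proof -
    have "A * Y = A * (X * A * X)" unfolding Y_def ..
    also have "\<dots> = A * (X * A) * X" using assoc_mult_mat[OF A XA X(1)] by simp
    also have "\<dots> = (A * X * A) * X" using assoc_mult_mat[OF A X(1) A] by simp
    finally show ?thesis using X by simp
  qed
  have AYA: "A * Y * A = A" using AY X by simp
  have YAY: "Y * A * Y = Y"
  proof -
    have "Y * A * Y = Y * (A * Y)" using assoc_mult_mat[OF Yc A Yc] .
    also have "\<dots> = X * A * X * (A * X)" using AY unfolding Y_def by simp
    also have "\<dots> = X * (A * X) * (A * X)" using assoc_mult_mat[OF X(1) A X(1)] by simp
    also have "\<dots> = X * (A * X * (A * X))" using assoc_mult_mat[OF X(1) AX AX] .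
    also have "A * X * (A * X) = A * X * A * X" using assoc_mult_mat[OF AX A X(1)] by simp
    also have "\<dots> = A * X" using X by simp
    finally show ?thesis unfolding Y_def using assoc_mult_mat[OF X(1) A X(1)] by simp
  qed
  have "Y \<in> mink_inv_123 A" unfolding mink_inv_123_def using Yc A AYA YAY AY X by auto
  then show "\<exists>Y. Y \<in> mink_inv_123 A" by blast
next
  assume "\<exists>Y. Y \<in> mink_inv_123 A"
  then show "\<exists>X. X \<in> mink_inv_13 A" unfolding mink_inv_123_def mink_inv_13_def by blast
qed

end
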